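(* Let $\mathbf{L}=U^{\oplus3}\oplus[-2]^{\oplus2}$. If $G\subset\mathrm{O}(\mathbf{L})$ is a group with $|G|=2$ whose image $G^{\sharp}$ in $\mathrm{O}(\mathbf{L}^{\sharp})$ is trivial, then $\mathbf{L}_G$ and $\mathbf{L}^G$ are $2$-elementary lattices.
   Context: $U$ is the hyperbolic plane, $[n]$ the rank one lattice generated by a vector of square $n$. $\mathbf{L}^{\sharp}=\mathbf{L}^*/\mathbf{L}$ is the discriminant group and $G^{\sharp}$ is the image of $G$ under the natural map $\mathrm{O}(\mathbf{L})\to\mathrm{O}(\mathbf{L}^{\sharp})$. A lattice is $2$-elementary if its discriminant group is isomorphic to $(\mathbb{Z}/2\mathbb{Z})^{\oplus a}$ for some $a\ge0$. $\mathbf{L}^G$ is the invariant sublattice and $\mathbf{L}_G=(\mathbf{L}^G)^{\perp}$ the coinvariant sublattice. *)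

theory Defs
  imports Complex_Main "HOL-Library.Numeral_Type"
begin

text \<open>The lattice L = U^3 + [-2]^2 is modelled as Z^8 inside Q^8 (vectors are
functions from the 8-element type to rat), with the Gram matrix gram below.\<close>

type_synonym vec8 = "8 \<Rightarrow> rat"
type_synonym mat8 = "8 \<Rightarrow> 8 \<Rightarrow> int"

definition gram :: mat8 where
  "gram i j =
     (if (i = 0 \<and> j = 1) \<or> (i = 1 \<and> j = 0) \<or>
         (i = 2 \<and> j = 3) \<or> (i = 3 \<and> j = 2) \<or>
         (i = 4 \<and> j = 5) \<or> (i = 5 \<and> j = 4) then 1
      else if i = j \<and> (i = 6 \<or> i = 7) then -2
      else 0)"

definition bform :: "vec8 \<Rightarrow> vec8 \<Rightarrow> rat" where
  "bform x y = (\<Sum>i\<in>UNIV. \<Sum>j\<in>UNIV. x i * of_int (gram i j) * y j)"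

definition Lat :: "vec8 set" where
  "Lat = {x. \<forall>i. x i \<in> \<int>}"

definition app :: "mat8 \<Rightarrow> vec8 \<Rightarrow> vec8" where
  "app g x = (\<lambda>i. \<Sum>j\<in>UNIV. of_int (g i j) * x j)"

definition matmul :: "mat8 \<Rightarrow> mat8 \<Rightarrow> mat8" where
  "matmul g h = (\<lambda>i k. \<Sum>j\<in>UNIV. g i j * h j k)"

definition idmat :: mat8 where
  "idmat = (\<lambda>i j. if i = j then 1 else 0)"

definition OL :: "mat8 set" where
  "OL = {g. (\<exists>h. matmul g h = idmat \<and> matmul h g = idmat) \<and>
            (\<forall>x y. bform (app g x) (app g y) = bform x y)}"

definition is_subgroup_OL :: "mat8 set \<Rightarrow> bool" where
  "is_subgroup_OL G \<longleftrightarrow> G \<subseteq> OL \<and> idmat \<in> G \<and>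
     (\<forall>g\<in>G. \<forall>h\<in>G. matmul g h \<in> G) \<and>
     (\<forall>g\<in>G. \<exists>h\<in>G. matmul g h = idmat \<and> matmul h g = idmat)"

definition qspan :: "vec8 set \<Rightarrow> vec8 set" where
  "qspan M = {x. \<exists>(c::nat \<Rightarrow> rat) (v::nat \<Rightarrow> vec8) k.
                  (\<forall>i<k. v i \<in> M) \<and> x = (\<lambda>t. \<Sum>i<k. c i * v i t)}"

definition dual :: "vec8 set \<Rightarrow> vec8 set" where
  "dual M = {x \<in> qspan M. \<forall>m\<in>M. bform x m \<in> \<int>}"

definition trivial_on_disc :: "mat8 set \<Rightarrow> bool" where
  "trivial_on_disc G \<longleftrightarrow> (\<forall>g\<in>G. \<forall>x\<in>dual Lat. (\<lambda>i. app g x i - x i) \<in> Lat)"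

definition invariant :: "mat8 set \<Rightarrow> vec8 set" where
  "invariant G = {x \<in> Lat. \<forall>g\<in>G. app g x = x}"

definition coinvariant :: "mat8 set \<Rightarrow> vec8 set" where
  "coinvariant G = {x \<in> Lat. \<forall>y\<in>invariant G. bform x y = 0}"

text \<open>M is 2-elementary: M^*/M is isomorphic to (Z/2Z)^a for some a.
  (Z/2Z)^a is modelled as the bool-vectors supported in {..<a} under xor; the
  isomorphism is given via a surjective homomorphism from M^* with kernel M.\<close>
definition two_elementary :: "vec8 set \<Rightarrow> bool" where
  "two_elementary M \<longleftrightarrow> (\<exists>(a::nat) (\<phi>::vec8 \<Rightarrow> nat \<Rightarrow> bool).
      (\<forall>x\<in>dual M. \<forall>y\<in>dual M. \<phi> (\<lambda>t. x t + y t) = (\<lambda>i. \<phi> x i \<noteq> \<phi> y i)) \<and>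
      \<phi> ` dual M = {v. \<forall>i\<ge>a. \<not> v i} \<and>
      {x \<in> dual M. \<phi> x = (\<lambda>_. False)} = M)"

end

theory Submission
  imports Defs
begin

lemma U8: "(UNIV :: 8 set) = {0,1,2,3,4,5,6,7}"
proof -
  have "({0,1,2,3,4,5,6,7} :: 8 set) = UNIV"
    by (rule card_subset_eq) simp_all
  then show ?thesis by simp
qed

lemma F2_basis:
  fixes I :: "'a set"
  assumes "finite I"
  shows "\<And>W. W \<subseteq> {w. \<forall>i. i \<notin> I \<longrightarrow> \<not> w i} \<Longrightarrow> (\<lambda>_. False) \<in> W \<Longrightarrow>
    (\<forall>u\<in>W. \<forall>v\<in>W. (\<lambda>i. u i \<noteq> v i) \<in> W) \<Longrightarrow>
    \<exists>P \<subseteq> I. inj_on (\<lambda>w i. i \<in> P \<and> w i) W \<and>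
       (\<lambda>w i. i \<in> P \<and> w i) ` W = {v. \<forall>i. i \<notin> P \<longrightarrow> \<not> v i}"
  using assms
proof (induction I rule: finite_induct)
  case empty
  then have W: "W = {\<lambda>_. False}" by auto
  show ?case
    by (rule exI[of _ "{}"]) (auto simp: W)
next
  case (insert i I W)
  define W' where "W' = (\<lambda>w. w(i := False)) ` W"
  have s1: "W' \<subseteq> {w. \<forall>j. j \<notin> I \<longrightarrow> \<not> w j}" using insert.prems(1) by (auto simp: W'_def split: if_splits)
  have s2: "(\<lambda>_. False) \<in> W'" unfolding W'_def
    using insert.prems(2) by (auto intro!: image_eqI[where x="\<lambda>_. False"])
  have s3: "\<forall>u\<in>W'. \<forall>v\<in>W'. (\<lambda>j. u j \<noteq> v j) \<in> W'"
  proof (intro ballI)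
    fix u v assume "u \<in> W'" "v \<in> W'"
    then obtain u0 v0 where u0: "u0 \<in> W" "u = u0(i:=False)" and v0: "v0 \<in> W" "v = v0(i:=False)"
      by (auto simp: W'_def)
    have "(\<lambda>j. u j \<noteq> v j) = (\<lambda>j. u0 j \<noteq> v0 j)(i := False)" using u0 v0 by auto
    then show "(\<lambda>j. u j \<noteq> v j) \<in> W'" using insert.prems(3) u0 v0 unfolding W'_def by blast
  qed
  obtain P' where P': "P' \<subseteq> I" "inj_on (\<lambda>w j. j \<in> P' \<and> w j) W'"
    "(\<lambda>w j. j \<in> P' \<and> w j) ` W' = {v. \<forall>j. j \<notin> P' \<longrightarrow> \<not> v j}"
    using insert.IH[OF s1 s2 s3] by blast
  have iP: "i \<notin> P'" using P'(1) insert.hyps(2) by auto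
  have rupd: "(\<lambda>j. j \<in> P' \<and> (w(i:=False)) j) = (\<lambda>j. j \<in> P' \<and> w j)" for w
    using iP by auto
  show ?case
  proof (cases "(\<lambda>j. j = i) \<in> W")
    case True
    show ?thesis
    proof (intro exI[of _ "insert i P'"] conjI)
      show "insert i P' \<subseteq> insert i I" using P'(1) by auto
      show "inj_on (\<lambda>w j. j \<in> insert i P' \<and> w j) W"
      proof (rule inj_onI)
        fix u v assume u: "u \<in> W" and v: "v \<in> W"
          and eq: "(\<lambda>j. j \<in> insert i P' \<and> u j) = (\<lambda>j. j \<in> insert i P' \<and> v j)"
        have "(\<lambda>j. j \<in> P' \<and> u j) = (\<lambda>j. j \<in> P' \<and> v j)"
        proof
          fix j show "(j \<in> P' \<and> u j) = (j \<in> P' \<and> v j)" using fun_cong[OF eq, of j] by auto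
        qed
        then have "(\<lambda>j. j \<in> P' \<and> (u(i:=False)) j) = (\<lambda>j. j \<in> P' \<and> (v(i:=False)) j)"
          by (simp only: rupd)
        then have uv: "u(i:=False) = v(i:=False)"
          using P'(2) u v unfolding W'_def inj_on_def by blast
        have ui: "u i = v i" using fun_cong[OF eq, of i] by auto
        show "u = v"
        proof
          fix j show "u j = v j" using fun_cong[OF uv, of j] ui by (cases "j = i") auto
        qed
      qed
      show "(\<lambda>w j. j \<in> insert i P' \<and> w j) ` W = {v. \<forall>j. j \<notin> insert i P' \<longrightarrow> \<not> v j}"
      proof
        show "(\<lambda>w j. j \<in> insert i P' \<and> w j) ` W \<subseteq> {v. \<forall>j. j \<notin> insert i P' \<longrightarrow> \<not> v j}" by auto
      next
        show "{v. \<forall>j. j \<notin> insert i P' \<longrightarrow> \<not> v j} \<subseteq> (\<lambda>w j. j \<in> insert i P' \<and> w j) ` W"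
        proof
          fix v assume v: "v \<in> {v. \<forall>j. j \<notin> insert i P' \<longrightarrow> \<not> v j}"
          then have "v(i:=False) \<in> {v. \<forall>j. j \<notin> P' \<longrightarrow> \<not> v j}" by auto
          then obtain w' where "w' \<in> W'" "(\<lambda>j. j \<in> P' \<and> w' j) = v(i:=False)"
            using P'(3) by (metis (no_types, lifting) imageE)
          then obtain w where w: "w \<in> W" "(\<lambda>j. j \<in> P' \<and> w j) = v(i:=False)"
            unfolding W'_def using rupd by auto
          show "v \<in> (\<lambda>w j. j \<in> insert i P' \<and> w j) ` W"
          proof (cases "w i = v i")
            case True
            have "(\<lambda>j. j \<in> insert i P' \<and> w j) = v"
            proof
              fix j show "(j \<in> insert i P' \<and> w j) = v j"
                using fun_cong[OF w(2), of j] True v by (cases "j = i") auto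
            qed
            then show ?thesis using w(1) by blast
          next
            case False
            define u where "u = (\<lambda>j. w j \<noteq> (j = i))"
            have uW: "u \<in> W" unfolding u_def using bspec[OF bspec[OF insert.prems(3) w(1)] \<open>(\<lambda>j. j = i) \<in> W\<close>] by simp
            have "(\<lambda>j. j \<in> insert i P' \<and> u j) = v"
            proof
              fix j show "(j \<in> insert i P' \<and> u j) = v j"
                using fun_cong[OF w(2), of j] False v unfolding u_def by (cases "j = i") auto
            qed
            then show ?thesis using uW by blast
          qed
        qed
      qed
    qed
  next
    case False
    show ?thesis
    proof (intro exI[of _ "P'"] conjI)
      show "P' \<subseteq> insert i I" using P'(1) by auto
      show "inj_on (\<lambda>w j. j \<in> P' \<and> w j) W"
      proof (rule inj_onI)
        fix u v assume u: "u \<in> W" and v: "v \<in> W"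
          and eq: "(\<lambda>j. j \<in> P' \<and> u j) = (\<lambda>j. j \<in> P' \<and> v j)"
        then have "(\<lambda>j. j \<in> P' \<and> (u(i:=False)) j) = (\<lambda>j. j \<in> P' \<and> (v(i:=False)) j)"
          by (simp only: rupd)
        then have uv: "u(i:=False) = v(i:=False)"
          using P'(2) u v unfolding W'_def inj_on_def by blast
        show "u = v"
        proof (rule ccontr)
          assume "u \<noteq> v"
          then obtain j where j: "u j \<noteq> v j" by auto
          have "j = i" using fun_cong[OF uv, of j] j by (auto split: if_splits)
          then have "u i \<noteq> v i" using j by simp
          have "(\<lambda>j. u j \<noteq> v j) = (\<lambda>j. j = i)"
          proof
            fix k show "(u k \<noteq> v k) = (k = i)"
              using fun_cong[OF uv, of k] \<open>u i \<noteq> v i\<close> by (cases "k = i") auto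
          qed
          moreover have "(\<lambda>j. u j \<noteq> v j) \<in> W" using insert.prems(3) u v by blast
          ultimately show False using False by simp
        qed
      qed
      have "(\<lambda>w j. j \<in> P' \<and> w j) ` W = (\<lambda>w j. j \<in> P' \<and> w j) ` W'"
        unfolding W'_def image_image using rupd by simp
      then show "(\<lambda>w j. j \<in> P' \<and> w j) ` W = {v. \<forall>j. j \<notin> P' \<longrightarrow> \<not> v j}" using P'(3) by simp
    qed
  qed
qed


lemma half_even: "((of_int m / 2 :: rat) \<in> \<int>) = even m"
proof
  assume "of_int m / 2 \<in> (\<int> :: rat set)"
  then obtain k where "(of_int m / 2 :: rat) = of_int k" by (auto elim: Ints_cases)
  then have "(of_int m :: rat) = of_int (2 * k)" by simp
  then have "m = 2 * k" by (simp only: of_int_eq_iff)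
  then show "even m" by simp
next
  assume "even m"
  then obtain k where "m = 2 * k" by auto
  then show "of_int m / 2 \<in> (\<int> :: rat set)" by simp
qed

lemma half_xor:
  assumes "2 * (a::rat) \<in> \<int>" "2 * b \<in> \<int>"
  shows "(a + b \<notin> \<int>) = ((a \<notin> \<int>) \<noteq> (b \<notin> \<int>))"
proof -
  obtain m where m: "2 * a = of_int m" using assms(1) by (auto elim: Ints_cases)
  obtain n where n: "2 * b = of_int n" using assms(2) by (auto elim: Ints_cases)
  have a: "a = of_int m / 2" using m by simp
  have b: "b = of_int n / 2" using n by simp
  have ab: "a + b = of_int (m + n) / 2" using a b by (simp add: add_divide_distrib)
  have e1: "(a + b \<notin> \<int>) = odd (m + n)" unfolding ab half_even by simp
  have e2: "(a \<notin> \<int>) = odd m" unfolding a half_even by simp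
  have e3: "(b \<notin> \<int>) = odd n" unfolding b half_even by simp
  show ?thesis unfolding e1 e2 e3 by auto
qed

lemma two_elem_crit:
  assumes add: "\<And>x y. x \<in> dual M \<Longrightarrow> y \<in> dual M \<Longrightarrow> (\<lambda>t. x t + y t) \<in> dual M"
    and two: "\<And>x. x \<in> dual M \<Longrightarrow> (\<lambda>t. 2 * x t) \<in> Lat"
    and ker: "{x \<in> dual M. x \<in> Lat} = M"
    and zero: "(\<lambda>t. 0) \<in> M"
  shows "two_elementary M"
proof -
  define \<psi> :: "vec8 \<Rightarrow> 8 \<Rightarrow> bool" where "\<psi> x = (\<lambda>i. x i \<notin> \<int>)" for x
  have hom: "\<psi> (\<lambda>t. x t + y t) = (\<lambda>i. \<psi> x i \<noteq> \<psi> y i)" if "x \<in> dual M" "y \<in> dual M" for x y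
  proof
    fix i
    have "2 * x i \<in> \<int>" using two[OF that(1)] unfolding Lat_def by auto
    moreover have "2 * y i \<in> \<int>" using two[OF that(2)] unfolding Lat_def by auto
    ultimately show "\<psi> (\<lambda>t. x t + y t) i = (\<psi> x i \<noteq> \<psi> y i)"
      unfolding \<psi>_def using half_xor by simp
  qed
  have zM: "(\<lambda>t. 0) \<in> dual M" using zero ker by auto
  have kerpsi: "(\<psi> x = (\<lambda>_. False)) = (x \<in> Lat)" for x
    unfolding \<psi>_def Lat_def by (auto simp: fun_eq_iff)
  define W where "W = \<psi> ` dual M"
  have W1: "W \<subseteq> {w. \<forall>i. i \<notin> (UNIV::8 set) \<longrightarrow> \<not> w i}" by auto
  have W2: "(\<lambda>_. False) \<in> W" unfolding W_def using zM kerpsi[of "\<lambda>t. 0"]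
    unfolding Lat_def by (auto intro!: image_eqI[where x="\<lambda>t. 0"])
  have W3: "\<forall>u\<in>W. \<forall>v\<in>W. (\<lambda>i. u i \<noteq> v i) \<in> W"
  proof (intro ballI)
    fix u v assume "u \<in> W" "v \<in> W"
    then obtain x y where xy: "x \<in> dual M" "y \<in> dual M" "u = \<psi> x" "v = \<psi> y"
      unfolding W_def by auto
    have "(\<lambda>i. u i \<noteq> v i) = \<psi> (\<lambda>t. x t + y t)" using hom[OF xy(1,2)] xy(3,4) by simp
    moreover have "(\<lambda>t. x t + y t) \<in> dual M" using add xy(1,2) by blast
    ultimately show "(\<lambda>i. u i \<noteq> v i) \<in> W" unfolding W_def by blast
  qed
  obtain P where P: "inj_on (\<lambda>w i. i \<in> P \<and> w i) W"
     "(\<lambda>w i. i \<in> P \<and> w i) ` W = {v. \<forall>i. i \<notin> P \<longrightarrow> \<not> v i}"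
    using F2_basis[OF _ W1 W2 W3] by auto
  obtain h where h: "bij_betw h {0..<card P} P"
    using ex_bij_betw_nat_finite[of P] by auto
  define a where "a = card P"
  define \<phi> where "\<phi> x = (\<lambda>n. n < a \<and> \<psi> x (h n))" for x
  have "(\<forall>x\<in>dual M. \<forall>y\<in>dual M. \<phi> (\<lambda>t. x t + y t) = (\<lambda>i. \<phi> x i \<noteq> \<phi> y i))"
    unfolding \<phi>_def using hom by auto
  moreover have "\<phi> ` dual M = {v. \<forall>i\<ge>a. \<not> v i}"
  proof
    show "\<phi> ` dual M \<subseteq> {v. \<forall>i\<ge>a. \<not> v i}" unfolding \<phi>_def by auto
  next
    show "{v. \<forall>i\<ge>a. \<not> v i} \<subseteq> \<phi> ` dual M"
    proof
      fix v assume v: "v \<in> {v. \<forall>i\<ge>a. \<not> v i}"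
      define u where "u = (\<lambda>j. j \<in> P \<and> v (the_inv_into {0..<a} h j))"
      have "u \<in> {v. \<forall>i. i \<notin> P \<longrightarrow> \<not> v i}" unfolding u_def by auto
      then have "u \<in> (\<lambda>w i. i \<in> P \<and> w i) ` W" using P(2) by simp
      then obtain w where w: "w \<in> W" "(\<lambda>i. i \<in> P \<and> w i) = u" by blast
      then obtain x where x: "x \<in> dual M" "(\<lambda>i. i \<in> P \<and> \<psi> x i) = u"
        unfolding W_def by blast
      have "\<phi> x = v"
      proof
        fix n
        show "\<phi> x n = v n"
        proof (cases "n < a")
          case True
          then have hn: "h n \<in> P" using h unfolding a_def bij_betw_def by auto
          have inv: "the_inv_into {0..<a} h (h n) = n"
            using True h unfolding a_def bij_betw_def by (auto intro: the_inv_into_f_f)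
          show ?thesis using fun_cong[OF x(2), of "h n"] hn inv True
            unfolding \<phi>_def u_def by auto
        next
          case False
          then show ?thesis using v unfolding \<phi>_def by auto
        qed
      qed
      then show "v \<in> \<phi> ` dual M" using x(1) by blast
    qed
  qed
  moreover have "{x \<in> dual M. \<phi> x = (\<lambda>_. False)} = M"
  proof -
    have "(\<phi> x = (\<lambda>_. False)) = (x \<in> Lat)" if x: "x \<in> dual M" for x
    proof -
      have "(\<phi> x = (\<lambda>_. False)) = ((\<lambda>i. i \<in> P \<and> \<psi> x i) = (\<lambda>i. i \<in> P \<and> (\<lambda>_. False) i))"
      proof
        assume a1: "\<phi> x = (\<lambda>_. False)"
        show "(\<lambda>i. i \<in> P \<and> \<psi> x i) = (\<lambda>i. i \<in> P \<and> (\<lambda>_. False) i)"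
        proof
          fix j
          show "(j \<in> P \<and> \<psi> x j) = (j \<in> P \<and> (\<lambda>_. False) j)"
          proof (cases "j \<in> P")
            case True
            then have "j \<in> h ` {0..<a}" using h unfolding a_def bij_betw_def by auto
            then obtain n where "n < a" "h n = j" by auto
            then show ?thesis using fun_cong[OF a1, of n] unfolding \<phi>_def by auto
          qed simp
        qed
      next
        assume a2: "(\<lambda>i. i \<in> P \<and> \<psi> x i) = (\<lambda>i. i \<in> P \<and> (\<lambda>_. False) i)"
        show "\<phi> x = (\<lambda>_. False)"
        proof
          fix n
          show "\<phi> x n = False"
          proof (cases "n < a")
            case True
            then have "h n \<in> P" using h unfolding a_def bij_betw_def by auto
            then show ?thesis using fun_cong[OF a2, of "h n"] unfolding \<phi>_def by auto
          qed (simp add: \<phi>_def)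
        qed
      qed
      also have "\<dots> = (\<psi> x = (\<lambda>_. False))"
        using P(1) x W2 unfolding W_def inj_on_def
        by (metis (no_types, lifting) imageI W_def)
      also have "\<dots> = (x \<in> Lat)" by (rule kerpsi)
      finally show ?thesis .
    qed
    then show ?thesis using ker by auto
  qed
  ultimately show ?thesis unfolding two_elementary_def by blast
qed


lemma bform_add_left: "bform (\<lambda>t. x t + y t) z = bform x z + bform y z"
  unfolding bform_def by (simp add: algebra_simps sum.distrib)
lemma bform_add_right: "bform z (\<lambda>t. x t + y t) = bform z x + bform z y"
  unfolding bform_def by (simp add: algebra_simps sum.distrib)
lemma bform_diff_left: "bform (\<lambda>t. x t - y t) z = bform x z - bform y z"
  unfolding bform_def by (simp add: algebra_simps sum_subtractf)
lemma bform_diff_right: "bform z (\<lambda>t. x t - y t) = bform z x - bform z y"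
  unfolding bform_def by (simp add: algebra_simps sum_subtractf)
lemma bform_scale_left: "bform (\<lambda>t. c * x t) z = c * bform x z"
  unfolding bform_def by (simp add: algebra_simps sum_distrib_left)
lemma bform_zero_left: "bform (\<lambda>t. 0) z = 0"
  unfolding bform_def by simp

lemma gram_sym: "gram i j = gram j i"
  unfolding gram_def by auto
lemma bform_sym: "bform x y = bform y x"
  unfolding bform_def
  by (subst sum.swap) (simp add: gram_sym algebra_simps)

lemma bform_sum_left: fixes c :: "nat \<Rightarrow> rat" shows "bform (\<lambda>t. \<Sum>l<k. c l * v l t) u = (\<Sum>l<k. c l * bform (v l) u)"
proof (induction k)
  case 0
  then show ?case using bform_zero_left by simp
next
  case (Suc k)
  have "bform (\<lambda>t. \<Sum>l<Suc k. c l * v l t) u = bform (\<lambda>t. (\<Sum>l<k. c l * v l t) + c k * v k t) u"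
    by simp
  also have "\<dots> = bform (\<lambda>t. \<Sum>l<k. c l * v l t) u + c k * bform (v k) u"
    by (simp only: bform_add_left bform_scale_left)
  finally show ?case using Suc by simp
qed

lemma app_add: "app g (\<lambda>t. x t + y t) = (\<lambda>i. app g x i + app g y i)"
  unfolding app_def by (simp add: algebra_simps sum.distrib)
lemma app_scale: "app g (\<lambda>t. c * x t) = (\<lambda>i. c * app g x i)"
  unfolding app_def by (simp add: algebra_simps sum_distrib_left)
lemma app_zero: "app g (\<lambda>t. 0) = (\<lambda>i. 0)"
  unfolding app_def by simp
lemma app_sum: fixes c :: "nat \<Rightarrow> rat" shows "app g (\<lambda>t. \<Sum>l<k. c l * v l t) = (\<lambda>i. \<Sum>l<k. c l * app g (v l) i)"
proof (induction k)
  case 0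
  then show ?case using app_zero by simp
next
  case (Suc k)
  have "app g (\<lambda>t. \<Sum>l<Suc k. c l * v l t) = app g (\<lambda>t. (\<Sum>l<k. c l * v l t) + c k * v k t)"
    by simp
  also have "\<dots> = (\<lambda>i. app g (\<lambda>t. \<Sum>l<k. c l * v l t) i + c k * app g (v k) i)"
    by (simp only: app_add app_scale)
  finally show ?case using Suc by simp
qed

lemma app_matmul: "app (matmul g h) x = app g (app h x)"
proof
  fix i
  have "app (matmul g h) x i = (\<Sum>k\<in>UNIV. \<Sum>j\<in>UNIV. of_int (g i j) * (of_int (h j k) * x k))"
    unfolding app_def matmul_def by (simp add: of_int_sum sum_distrib_right mult.assoc)
  also have "\<dots> = (\<Sum>j\<in>UNIV. \<Sum>k\<in>UNIV. of_int (g i j) * (of_int (h j k) * x k))"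
    by (rule sum.swap)
  also have "\<dots> = app g (app h x) i"
    unfolding app_def by (simp add: sum_distrib_left)
  finally show "app (matmul g h) x i = app g (app h x) i" .
qed

lemma app_id: "app idmat x = x"
proof
  fix i
  have "(\<Sum>j\<in>UNIV. of_int (idmat i j) * x j) = (\<Sum>j\<in>UNIV. if i = j then x j else 0)"
    by (rule sum.cong) (auto simp: idmat_def)
  then show "app idmat x i = x i" unfolding app_def by simp
qed

lemma Lat_add: "x \<in> Lat \<Longrightarrow> y \<in> Lat \<Longrightarrow> (\<lambda>t. x t + y t) \<in> Lat"
  unfolding Lat_def by auto
lemma Lat_diff: "x \<in> Lat \<Longrightarrow> y \<in> Lat \<Longrightarrow> (\<lambda>t. x t - y t) \<in> Lat"
  unfolding Lat_def by auto
lemma Lat_two: "x \<in> Lat \<Longrightarrow> (\<lambda>t. 2 * x t) \<in> Lat"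
  unfolding Lat_def by auto
lemma Lat_zero: "(\<lambda>t. 0) \<in> Lat"
  unfolding Lat_def by auto
lemma app_Lat: "x \<in> Lat \<Longrightarrow> app g x \<in> Lat"
  unfolding Lat_def app_def by (auto intro!: Ints_sum Ints_mult)
lemma bform_Lat: "x \<in> Lat \<Longrightarrow> y \<in> Lat \<Longrightarrow> bform x y \<in> \<int>"
  unfolding Lat_def bform_def by (auto intro!: Ints_sum Ints_mult)

lemma bform_app: "g \<in> OL \<Longrightarrow> bform (app g x) (app g y) = bform x y"
  unfolding OL_def by auto


lemma sum_delta_mult: fixes f :: "8 \<Rightarrow> rat" shows "(\<Sum>k\<in>UNIV. f k * (if k = j then c else 0)) = f j * (c::rat)"
proof -
  have e: "(\<lambda>k. f k * (if k = j then c else 0)) = (\<lambda>k. if k = j then f k * c else 0)" by auto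
  show ?thesis unfolding e by simp
qed

lemma bform_e: "bform z (\<lambda>i. if i = j then c else 0) = c * (\<Sum>i\<in>UNIV. z i * of_int (gram i j))"
  unfolding bform_def sum_delta_mult by (simp add: sum_distrib_left algebra_simps)

lemma sum_delta_left: fixes z :: "8 \<Rightarrow> rat" shows "(\<Sum>i\<in>UNIV. z i * (if i = j then c else 0)) = z j * (c::rat)"
  by (rule sum_delta_mult)

lemma gcol0: "of_int (gram i 0) = (if i = 1 then 1 else (0::rat))" unfolding gram_def by auto
lemma gcol1: "of_int (gram i 1) = (if i = 0 then 1 else (0::rat))" unfolding gram_def by auto
lemma gcol2: "of_int (gram i 2) = (if i = 3 then 1 else (0::rat))" unfolding gram_def by auto
lemma gcol3: "of_int (gram i 3) = (if i = 2 then 1 else (0::rat))" unfolding gram_def by auto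
lemma gcol4: "of_int (gram i 4) = (if i = 5 then 1 else (0::rat))" unfolding gram_def by auto
lemma gcol5: "of_int (gram i 5) = (if i = 4 then 1 else (0::rat))" unfolding gram_def by auto
lemma gcol6: "of_int (gram i 6) = (if i = 6 then -2 else (0::rat))" unfolding gram_def by auto
lemma gcol7: "of_int (gram i 7) = (if i = 7 then -2 else (0::rat))" unfolding gram_def by auto

lemma qspan_self: "M \<subseteq> qspan M"
proof
  fix m assume m: "m \<in> M"
  show "m \<in> qspan M" unfolding qspan_def
    apply (rule CollectI)
    apply (rule exI[of _ "\<lambda>_. 1"], rule exI[of _ "\<lambda>_. m"], rule exI[of _ 1])
    using m by auto
qed

lemma sum_split_nat: fixes f :: "nat \<Rightarrow> 'a::comm_monoid_add" and k1 k2 :: nat shows "(\<Sum>i<k1 + k2. f i) = (\<Sum>i<k1. f i) + (\<Sum>i<k2. f (k1 + i))"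
  by (induction k2) (simp_all add: add.assoc)

lemma qspan_add:
  assumes "x \<in> qspan M" "y \<in> qspan M"
  shows "(\<lambda>t. x t + y t) \<in> qspan M"
proof -
  obtain c1 :: "nat \<Rightarrow> rat" and v1 :: "nat \<Rightarrow> vec8" and k1 :: nat where 1: "\<forall>i<k1. v1 i \<in> M" "x = (\<lambda>t. \<Sum>i<k1. c1 i * v1 i t)"
    using assms(1) unfolding qspan_def by blast
  obtain c2 :: "nat \<Rightarrow> rat" and v2 :: "nat \<Rightarrow> vec8" and k2 :: nat where 2: "\<forall>i<k2. v2 i \<in> M" "y = (\<lambda>t. \<Sum>i<k2. c2 i * v2 i t)"
    using assms(2) unfolding qspan_def by blast
  define c where "c i = (if i < k1 then c1 i else c2 (i - k1))" for i
  define v where "v i = (if i < k1 then v1 i else v2 (i - k1))" for i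
  have "\<forall>i<k1 + k2. v i \<in> M" using 1 2 unfolding v_def by auto
  moreover have "(\<lambda>t. x t + y t) = (\<lambda>t. \<Sum>i<k1 + k2. c i * v i t)"
  proof
    fix t
    have "(\<Sum>i<k1 + k2. c i * v i t) = (\<Sum>i<k1. c i * v i t) + (\<Sum>i<k2. c (k1 + i) * v (k1 + i) t)"
      by (rule sum_split_nat)
    also have "(\<Sum>i<k1. c i * v i t) = (\<Sum>i<k1. c1 i * v1 i t)"
      by (rule sum.cong) (auto simp: c_def v_def)
    also have "(\<Sum>i<k2. c (k1 + i) * v (k1 + i) t) = (\<Sum>i<k2. c2 i * v2 i t)"
      by (rule sum.cong) (auto simp: c_def v_def)
    finally show "x t + y t = (\<Sum>i<k1 + k2. c i * v i t)" using 1 2 by simp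
  qed
  ultimately show ?thesis unfolding qspan_def by blast
qed

lemma dual_add: "x \<in> dual M \<Longrightarrow> y \<in> dual M \<Longrightarrow> (\<lambda>t. x t + y t) \<in> dual M"
  unfolding dual_def using qspan_add by (auto simp: bform_add_left)

lemma sub_dual: "M \<subseteq> Lat \<Longrightarrow> M \<subseteq> dual M"
  unfolding dual_def using qspan_self bform_Lat by blast

lemma dual_Lat_two:
  assumes w: "w \<in> dual Lat"
  shows "(\<lambda>t. 2 * w t) \<in> Lat"
proof -
  have eL: "(\<lambda>i. if i = j then 1 else 0) \<in> dual Lat" for j :: 8
    using sub_dual[of Lat] unfolding Lat_def by auto
  have bi: "bform w (\<lambda>i. if i = j then 1 else 0) \<in> \<int>" for j :: 8
    using w eL[of j] unfolding dual_def by (auto simp: Lat_def)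
  have "2 * w i \<in> \<int>" for i :: 8
  proof -
    have "i \<in> {0,1,2,3,4,5,6,7}" using U8 by blast
    moreover have "2 * w 0 \<in> \<int>" using bi[of 1] by (simp add: bform_e gcol1 sum_delta_left)
    moreover have "2 * w 1 \<in> \<int>" using bi[of 0] by (simp add: bform_e gcol0 sum_delta_left)
    moreover have "2 * w 2 \<in> \<int>" using bi[of 3] by (simp add: bform_e gcol3 sum_delta_left)
    moreover have "2 * w 3 \<in> \<int>" using bi[of 2] by (simp add: bform_e gcol2 sum_delta_left)
    moreover have "2 * w 4 \<in> \<int>" using bi[of 5] by (simp add: bform_e gcol5 sum_delta_left)
    moreover have "2 * w 5 \<in> \<int>" using bi[of 4] by (simp add: bform_e gcol4 sum_delta_left)
    moreover have "2 * w 6 \<in> \<int>"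
    proof -
      have "- (2 * w 6) \<in> \<int>" using bi[of 6] by (simp add: bform_e gcol6 sum_delta_left mult.commute)
      then have "- (- (2 * w 6)) \<in> \<int>" by (rule Ints_minus)
      then show ?thesis by simp
    qed
    moreover have "2 * w 7 \<in> \<int>"
    proof -
      have "- (2 * w 7) \<in> \<int>" using bi[of 7] by (simp add: bform_e gcol7 sum_delta_left mult.commute)
      then have "- (- (2 * w 7)) \<in> \<int>" by (rule Ints_minus)
      then show ?thesis by simp
    qed
    ultimately show ?thesis by blast
  qed
  then show ?thesis unfolding Lat_def by auto
qed

lemma Lat_of_pairing:
  assumes z: "\<And>w. w \<in> dual Lat \<Longrightarrow> bform z w \<in> \<int>"
  shows "z \<in> Lat"
proof -
  have eL: "(\<lambda>i. if i = j then 1 else 0) \<in> dual Lat" for j :: 8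
    using sub_dual[of Lat] unfolding Lat_def by auto
  have hL: "(\<lambda>i. if i = j then 1/2 else 0) \<in> dual Lat" if j: "j = 6 \<or> j = 7" for j :: 8
  proof -
    have eLat: "(\<lambda>i. if i = j then 1 else (0::rat)) \<in> Lat" unfolding Lat_def by auto
    have q: "(\<lambda>i. if i = j then 1/2 else (0::rat)) \<in> qspan Lat"
      unfolding qspan_def
      apply (rule CollectI)
      apply (rule exI[of _ "\<lambda>_. 1/2"], rule exI[of _ "\<lambda>_. (\<lambda>i. if i = j then 1 else 0)"], rule exI[of _ 1])
      using eLat by auto
    have "bform (\<lambda>i. if i = j then 1/2 else 0) m \<in> \<int>" if m: "m \<in> Lat" for m
    proof -
      have "bform (\<lambda>i. if i = j then 1/2 else 0) m = - m j"
        using j by (auto simp: bform_sym[of _ m] bform_e gcol6 gcol7 sum_delta_left)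
      then show ?thesis using m unfolding Lat_def by auto
    qed
    then show ?thesis using q unfolding dual_def by blast
  qed
  have bi: "bform z (\<lambda>i. if i = j then 1 else 0) \<in> \<int>" for j :: 8
    using z eL by blast
  have "z i \<in> \<int>" for i :: 8
  proof -
    have "i \<in> {0,1,2,3,4,5,6,7}" using U8 by blast
    moreover have "z 0 \<in> \<int>" using bi[of 1] by (simp add: bform_e gcol1 sum_delta_left)
    moreover have "z 1 \<in> \<int>" using bi[of 0] by (simp add: bform_e gcol0 sum_delta_left)
    moreover have "z 2 \<in> \<int>" using bi[of 3] by (simp add: bform_e gcol3 sum_delta_left)
    moreover have "z 3 \<in> \<int>" using bi[of 2] by (simp add: bform_e gcol2 sum_delta_left)
    moreover have "z 4 \<in> \<int>" using bi[of 5] by (simp add: bform_e gcol5 sum_delta_left)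
    moreover have "z 5 \<in> \<int>" using bi[of 4] by (simp add: bform_e gcol4 sum_delta_left)
    moreover have "z 6 \<in> \<int>"
    proof -
      have "- z 6 \<in> \<int>" using z[OF hL[of 6]] by (simp add: bform_e gcol6 sum_delta_left)
      then have "- (- (z 6)) \<in> \<int>" by (rule Ints_minus)
      then show ?thesis by simp
    qed
    moreover have "z 7 \<in> \<int>"
    proof -
      have "- z 7 \<in> \<int>" using z[OF hL[of 7]] by (simp add: bform_e gcol7 sum_delta_left)
      then have "- (- (z 7)) \<in> \<int>" by (rule Ints_minus)
      then show ?thesis by simp
    qed
    ultimately show ?thesis by blast
  qed
  then show ?thesis unfolding Lat_def by auto
qed

theorem lemma4p2:
  fixes G :: "mat8 set"
  assumes "is_subgroup_OL G"
    and "card G = 2"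
    and "trivial_on_disc G"
  shows "two_elementary (coinvariant G) \<and> two_elementary (invariant G)"
proof -
  have sub: "G \<subseteq> OL" "idmat \<in> G" "\<forall>g\<in>G. \<forall>h\<in>G. matmul g h \<in> G"
    "\<forall>g\<in>G. \<exists>h\<in>G. matmul g h = idmat \<and> matmul h g = idmat"
    using assms(1) unfolding is_subgroup_OL_def by auto
  obtain a b where ab: "G = {a, b}" "a \<noteq> b" using assms(2) card_2_iff by metis
  define g where "g = (if a = idmat then b else a)"
  have Gg: "G = {idmat, g}" using ab sub(2) unfolding g_def by auto
  have gG: "g \<in> G" using Gg by auto
  have gOL: "g \<in> OL" using sub(1) gG by auto
  have gg: "app g (app g x) = x" for x
  proof -
    have "matmul g g \<in> G" using sub(3) gG by auto
    then consider "matmul g g = idmat" | "matmul g g = g" using Gg by auto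
    then show ?thesis
    proof cases
      case 1
      then show ?thesis using app_matmul[of g g x] app_id by simp
    next
      case 2
      obtain h where h: "matmul h g = idmat" using sub(4) gG by blast
      have hg: "app h (app g y) = y" for y using app_matmul[of h g y] h app_id by simp
      have gx: "app g (app g y) = app g y" for y using app_matmul[of g g y] 2 by simp
      have "app g y = y" for y
      proof -
        have "app h (app g (app g y)) = app h (app g y)" using gx by simp
        then show ?thesis using hg by simp
      qed
      then show ?thesis by simp
    qed
  qed
  have inv_char: "invariant G = {x \<in> Lat. app g x = x}"
    unfolding invariant_def Gg by (auto simp: app_id)
  have triv: "(\<lambda>i. app g w i - w i) \<in> Lat" if "w \<in> dual Lat" for w
    using assms(3) gG that unfolding trivial_on_disc_def by blast
  define I where "I = invariant G"
  define C where "C = coinvariant G"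
  have C_char: "C = {x \<in> Lat. \<forall>y\<in>I. bform x y = 0}"
    unfolding C_def I_def coinvariant_def by simp
  have I_char: "I = {x \<in> Lat. app g x = x}" unfolding I_def inv_char by simp
  have sI: "(\<lambda>t. w t + app g w t) \<in> I" if w: "w \<in> dual Lat" for w
  proof -
    have "(\<lambda>t. 2 * w t + (app g w t - w t)) \<in> Lat"
      by (rule Lat_add[OF dual_Lat_two[OF w] triv[OF w]])
    moreover have "(\<lambda>t. 2 * w t + (app g w t - w t)) = (\<lambda>t. w t + app g w t)" by (auto simp: algebra_simps)
    ultimately have "(\<lambda>t. w t + app g w t) \<in> Lat" by simp
    moreover have "app g (\<lambda>t. w t + app g w t) = (\<lambda>t. w t + app g w t)"
      by (auto simp: app_add gg algebra_simps)
    ultimately show ?thesis unfolding I_char by simp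
  qed
  have dC: "(\<lambda>t. w t - app g w t) \<in> C" if w: "w \<in> dual Lat" for w
  proof -
    have "(\<lambda>t. 0 - (app g w t - w t)) \<in> Lat"
      by (rule Lat_diff[OF Lat_zero triv[OF w]])
    moreover have "(\<lambda>t. 0 - (app g w t - w t)) = (\<lambda>t. w t - app g w t)" by auto
    ultimately have "(\<lambda>t. w t - app g w t) \<in> Lat" by simp
    moreover have "bform (\<lambda>t. w t - app g w t) y = 0" if y: "y \<in> I" for y
    proof -
      have "app g y = y" using y unfolding I_char by simp
      then have "bform (app g w) y = bform w y" using bform_app[OF gOL, of w y] by simp
      then show ?thesis by (simp add: bform_diff_left)
    qed
    ultimately show ?thesis unfolding C_char by simp
  qed
  have qI: "app g x = x" if x: "x \<in> qspan I" for x
  proof -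
    obtain c :: "nat \<Rightarrow> rat" and v :: "nat \<Rightarrow> vec8" and k :: nat where
      cv: "\<forall>i<k. v i \<in> I" "x = (\<lambda>t. \<Sum>i<k. c i * v i t)"
      using x unfolding qspan_def by blast
    have "app g (v i) = v i" if "i < k" for i using cv(1) that unfolding I_char by auto
    then show ?thesis unfolding cv(2) app_sum by simp
  qed
  have qC: "bform x y = 0" if x: "x \<in> qspan C" and y: "y \<in> I" for x y
  proof -
    obtain c :: "nat \<Rightarrow> rat" and v :: "nat \<Rightarrow> vec8" and k :: nat where
      cv: "\<forall>i<k. v i \<in> C" "x = (\<lambda>t. \<Sum>i<k. c i * v i t)"
      using x unfolding qspan_def by blast
    have "bform (v i) y = 0" if "i < k" for i using cv(1) that y unfolding C_char by auto
    then show ?thesis unfolding cv(2) bform_sum_left by simp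
  qed
  have IL: "I \<subseteq> Lat" unfolding I_char by auto
  have CL: "C \<subseteq> Lat" unfolding C_char by auto
  have twoI: "two_elementary I"
  proof (rule two_elem_crit)
    show "(\<lambda>t. x t + y t) \<in> dual I" if "x \<in> dual I" "y \<in> dual I" for x y
      using dual_add that by blast
    show "(\<lambda>t. 2 * x t) \<in> Lat" if x: "x \<in> dual I" for x
    proof (rule Lat_of_pairing)
      fix w assume w: "w \<in> dual Lat"
      have xq: "x \<in> qspan I" and xi: "\<forall>m\<in>I. bform x m \<in> \<int>" using x unfolding dual_def by auto
      have gx: "app g x = x" using qI[OF xq] .
      have "bform x (app g w) = bform x w" using bform_app[OF gOL, of x w] gx by simp
      then have "bform x (\<lambda>t. w t + app g w t) = 2 * bform x w" by (simp add: bform_add_right)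
      moreover have "bform x (\<lambda>t. w t + app g w t) \<in> \<int>" using xi sI[OF w] by blast
      ultimately show "bform (\<lambda>t. 2 * x t) w \<in> \<int>" by (simp add: bform_scale_left)
    qed
    show "{x \<in> dual I. x \<in> Lat} = I"
    proof
      show "{x \<in> dual I. x \<in> Lat} \<subseteq> I"
        using qI unfolding dual_def I_char by auto
      show "I \<subseteq> {x \<in> dual I. x \<in> Lat}" using sub_dual[OF IL] IL by auto
    qed
    show "(\<lambda>t. 0) \<in> I" unfolding I_char using Lat_zero app_zero by auto
  qed
  have twoC: "two_elementary C"
  proof (rule two_elem_crit)
    show "(\<lambda>t. x t + y t) \<in> dual C" if "x \<in> dual C" "y \<in> dual C" for x y
      using dual_add that by blast
    show "(\<lambda>t. 2 * x t) \<in> Lat" if x: "x \<in> dual C" for x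
    proof (rule Lat_of_pairing)
      fix w assume w: "w \<in> dual Lat"
      have xq: "x \<in> qspan C" and xi: "\<forall>m\<in>C. bform x m \<in> \<int>" using x unfolding dual_def by auto
      have "bform x (\<lambda>t. w t + app g w t) = 0" using qC[OF xq sI[OF w]] .
      moreover have "bform x (\<lambda>t. w t - app g w t) \<in> \<int>" using xi dC[OF w] by blast
      ultimately have "bform x (\<lambda>t. w t + app g w t) + bform x (\<lambda>t. w t - app g w t) \<in> \<int>" by simp
      moreover have "bform x (\<lambda>t. w t + app g w t) + bform x (\<lambda>t. w t - app g w t) = 2 * bform x w"
        by (simp add: bform_add_right bform_diff_right)
      ultimately show "bform (\<lambda>t. 2 * x t) w \<in> \<int>" by (simp add: bform_scale_left)
    qed
    show "{x \<in> dual C. x \<in> Lat} = C"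
    proof
      show "{x \<in> dual C. x \<in> Lat} \<subseteq> C"
        using qC unfolding dual_def C_char by auto
      show "C \<subseteq> {x \<in> dual C. x \<in> Lat}" using sub_dual[OF CL] CL by auto
    qed
    show "(\<lambda>t. 0) \<in> C" unfolding C_char using Lat_zero bform_zero_left by auto
  qed
  show ?thesis using twoI twoC unfolding I_def C_def by simp
qed

end
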